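(* Let $n\in\mathbb{N}$ and let $\sigma$ be a probability distribution on $[n]$ such that $\sigma_{\le i}>\tfrac in$ for every $i\in[n-1]$. Then the transition probabilities $P$ on $\mathbb{N}_0^{n-1}$ (defined in the context) admit the stationary distribution \[\pi=\bigotimes_{i=1}^{n-1}\mathrm{Geom}\Big(1-\frac{i}{n\,\sigma_{\le i}}\Big).\]
   Context: For a probability distribution $\sigma$ on $[n]$ write $\sigma_i=\Pr_{i^*\sim\sigma}[i^*=i]$ and $\sigma_{\le i}=\Pr_{i^*\sim\sigma}[i^*\le i]$. $\mathrm{Geom}(p)$ is the distribution of the number of failed independent Bernoulli($p$) trials before the first success (support $\mathbb{N}_0$), and $\bigotimes$ is the product of independent distributions. States are vectors $\vec d=(d_1,\dots,d_{n-1})\in\mathbb{N}_0^{n-1}$ (interpretation: $d_i$ is the number of elements strictly between the $i$-th and $(i+1)$-th smallest top-element of a MultiQueue with $n$ queues). Let $\vec e_i$ be the $i$-th unit vector for $i\in[n-1]$, and set the conventions $d_n=\infty$ and $\vec e_n=\vec 0$. The transition from a state $\vec d_{\mathrm{start}}$ to a state $\vec d_{\mathrm{end}}$ proceeds through transitional states $(\vec d,i)\in\mathbb{N}_0^{n-1}\times[n]$: (1) sample $i^*\sim\sigma$ and go to the transitional state $(\vec d_{\mathrm{start}},i^* )$. (2) While in a transitional state $(\vec d,i)$: if $d_i>0$, then with probability $(i-1)/i$ move to the transitional state $(\vec d-\vec e_i+\vec e_{i-1},i)$, and with probability $1/i$ end the transition in the state $\vec d_{\mathrm{end}}=\vec d-\vec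 e_i$; if $d_i=0$, move to the transitional state $(\vec d,i+1)$. $P(\vec d_{\mathrm{start}},\vec d_{\mathrm{end}})$ is the resulting probability of ending in $\vec d_{\mathrm{end}}$. A distribution $\pi$ is stationary if $\vec d_{\mathrm{start}}\sim\pi$ implies $\vec d_{\mathrm{end}}\sim\pi$. *)

theory Defs
  imports "HOL-Probability.Probability"
begin

text \<open>States are vectors d = (d_1,...,d_{n-1}) in N_0^{n-1}, represented as functions
  nat => nat that are 0 outside the index set {1..n-1}.
  mq_trans n d i is the distribution of the end state of a transition that is in the
  transitional state (d,i).  For i < n it follows the elementary steps literally.
  For i = n (d_n = infinity, e_n = 0) each step either ends (prob 1/n) in d or moves to
  d + e_{n-1} (prob (n-1)/n) and stays at index n; the number of moves before ending is
  therefore Geom(1/n), and this closed form is used.  The index 0 never occurs (sigma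
  lives on [n]); that case is given an arbitrary value.\<close>

function mq_trans :: "nat \<Rightarrow> (nat \<Rightarrow> nat) \<Rightarrow> nat \<Rightarrow> (nat \<Rightarrow> nat) pmf" where
  "mq_trans n d i =
     (if i = 0 then return_pmf d
      else if n \<le> i then
        map_pmf (\<lambda>k. d(n - 1 := d (n - 1) + k)) (geometric_pmf (1 / real n))
      else if 0 < d i then
        bind_pmf (bernoulli_pmf (1 / real i))
          (\<lambda>b. if b then return_pmf (d(i := d i - 1))
               else mq_trans n (d(i := d i - 1, i - 1 := d (i - 1) + 1)) i)
      else mq_trans n d (Suc i))"
  by pat_completeness auto
termination
  by (relation "measures [\<lambda>(n, d, i). n - i, \<lambda>(n, d, i). d i]") auto

definition mq_step :: "nat \<Rightarrow> nat pmf \<Rightarrow> (nat \<Rightarrow> nat) \<Rightarrow> (nat \<Rightarrow> nat) pmf" where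
  "mq_step n \<sigma> d = bind_pmf \<sigma> (\<lambda>i. mq_trans n d i)"

definition mq_P :: "nat \<Rightarrow> nat pmf \<Rightarrow> (nat \<Rightarrow> nat) \<Rightarrow> (nat \<Rightarrow> nat) \<Rightarrow> real" where
  "mq_P n \<sigma> d d' = pmf (mq_step n \<sigma> d) d'"

definition mq_stationary :: "nat \<Rightarrow> nat pmf \<Rightarrow> (nat \<Rightarrow> nat) pmf \<Rightarrow> bool" where
  "mq_stationary n \<sigma> \<pi> \<longleftrightarrow> bind_pmf \<pi> (mq_step n \<sigma>) = \<pi>"

end

theory Submission
  imports Defs
begin


lemma cauchy_nn:
  fixes f :: "nat \<Rightarrow> nat \<Rightarrow> ennreal"
  shows "(\<integral>\<^sup>+a. \<integral>\<^sup>+t. f a t \<partial>count_space UNIV \<partial>count_space UNIV)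
       = (\<integral>\<^sup>+c. (\<Sum>a\<le>c. f a (c - a)) \<partial>count_space UNIV)"
proof -
  let ?S = "{(c,a). a \<le> (c::nat)}"
  let ?h = "\<lambda>(c,a). f a (c - a)"
  have bij: "bij_betw (\<lambda>(a,t). (a+t, a)) UNIV ?S"
    by (rule bij_betwI[where g="\<lambda>(c,a). (a, c - a)"]) auto
  have "(\<integral>\<^sup>+a. \<integral>\<^sup>+t. f a t \<partial>count_space UNIV \<partial>count_space UNIV)
      = (\<integral>\<^sup>+p. (\<lambda>(a,t). f a t) p \<partial>count_space UNIV)"
    using nn_integral_fst_count_space[of "\<lambda>(a,t). f a t"] by simp
  also have "\<dots> = (\<integral>\<^sup>+p. ?h ((\<lambda>(a,t). (a+t, a)) p) \<partial>count_space UNIV)"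
    by (intro nn_integral_cong) auto
  also have "\<dots> = (\<integral>\<^sup>+q. ?h q \<partial>count_space ?S)"
    by (rule nn_integral_bij_count_space[OF bij])
  also have "\<dots> = (\<integral>\<^sup>+q. ?h q * indicator ?S q \<partial>count_space UNIV)"
    by (rule nn_integral_count_space_indicator) simp
  also have "\<dots> = (\<integral>\<^sup>+c. \<integral>\<^sup>+a. ?h (c,a) * indicator ?S (c,a) \<partial>count_space UNIV \<partial>count_space UNIV)"
    using nn_integral_fst_count_space[of "\<lambda>q. ?h q * indicator ?S q"] by simp
  also have "\<dots> = (\<integral>\<^sup>+c. (\<Sum>a\<le>c. f a (c - a)) \<partial>count_space UNIV)"
  proof (intro nn_integral_cong)
    fix c :: nat
    have "(\<integral>\<^sup>+a. ?h (c,a) * indicator ?S (c,a) \<partial>count_space UNIV)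
        = (\<integral>\<^sup>+a. f a (c - a) * indicator {..c} a \<partial>count_space UNIV)"
      by (intro nn_integral_cong) (auto split: split_indicator)
    also have "\<dots> = (\<integral>\<^sup>+a. f a (c - a) \<partial>count_space {..c})"
      by (rule nn_integral_count_space_indicator[symmetric]) simp
    also have "\<dots> = (\<Sum>a\<le>c. f a (c - a))"
      by (rule nn_integral_count_space_finite) simp
    finally show "(\<integral>\<^sup>+a. ?h (c,a) * indicator ?S (c,a) \<partial>count_space UNIV) = (\<Sum>a\<le>c. f a (c - a))" .
  qed
  finally show ?thesis .
qed



lemma conv_real:
  fixes x y sg s' s :: real
  assumes "s = sg + s'" "x * s' = s * y"
  shows "(\<Sum>a\<le>c. x^a * (sg + (if a = 0 then s' else 0)) * y^(c - a)) = s * x^c"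
proof (induction c)
  case 0 then show ?case using assms by simp
next
  case (Suc c)
  have "(\<Sum>a\<le>Suc c. x^a * (sg + (if a = 0 then s' else 0)) * y^(Suc c - a))
      = (\<Sum>a\<le>c. x^a * (sg + (if a = 0 then s' else 0)) * y^(Suc c - a)) + x^(Suc c) * sg"
    by simp
  also have "(\<Sum>a\<le>c. x^a * (sg + (if a = 0 then s' else 0)) * y^(Suc c - a))
     = y * (\<Sum>a\<le>c. x^a * (sg + (if a = 0 then s' else 0)) * y^(c - a))"
    by (simp add: sum_distrib_left Suc_diff_le mult_ac)
  also have "\<dots> = y * (s * x^c)" using Suc by simp
  finally have e: "(\<Sum>a\<le>Suc c. x^a * (sg + (if a = 0 then s' else 0)) * y^(Suc c - a)) = y * (s * x^c) + x^(Suc c) * sg" .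
  have "y * (s * x^c) = x^c * (x * s')" using assms(2) by (simp add: mult_ac)
  then show ?case using e assms(1) by (simp add: algebra_simps)
qed

lemma conv_nn:
  fixes x y sg s' s :: real and F :: "nat \<Rightarrow> ennreal"
  assumes "s = sg + s'" "x * s' = s * y" "0 \<le> x" "0 \<le> y" "0 \<le> sg" "0 \<le> s'"
  shows "(\<integral>\<^sup>+a. \<integral>\<^sup>+t. ennreal (x^a * (sg + (if a = 0 then s' else 0)) * y^t) * F (a + t)
            \<partial>count_space UNIV \<partial>count_space UNIV)
       = ennreal s * (\<integral>\<^sup>+c. ennreal (x^c) * F c \<partial>count_space UNIV)"
proof -
  have "(\<integral>\<^sup>+a. \<integral>\<^sup>+t. ennreal (x^a * (sg + (if a = 0 then s' else 0)) * y^t) * F (a + t)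
            \<partial>count_space UNIV \<partial>count_space UNIV)
      = (\<integral>\<^sup>+c. (\<Sum>a\<le>c. ennreal (x^a * (sg + (if a = 0 then s' else 0)) * y^(c-a)) * F c) \<partial>count_space UNIV)"
    by (subst cauchy_nn) simp
  also have "\<dots> = (\<integral>\<^sup>+c. ennreal (\<Sum>a\<le>c. x^a * (sg + (if a = 0 then s' else 0)) * y^(c-a)) * F c \<partial>count_space UNIV)"
    using assms by (subst sum_distrib_right[symmetric], subst sum_ennreal) auto
  also have "\<dots> = (\<integral>\<^sup>+c. ennreal s * (ennreal (x^c) * F c) \<partial>count_space UNIV)"
    using assms by (subst conv_real[OF assms(1,2)]) (simp add: ennreal_mult mult.assoc)
  also have "\<dots> = ennreal s * (\<integral>\<^sup>+c. ennreal (x^c) * F c \<partial>count_space UNIV)"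
    by (rule nn_integral_cmult) simp
  finally show ?thesis .
qed

lemma shift_nn:
  fixes f :: "nat \<Rightarrow> ennreal"
  shows "(\<integral>\<^sup>+b. f b \<partial>count_space UNIV) = f 0 + (\<integral>\<^sup>+b. f (Suc b) \<partial>count_space UNIV)"
  unfolding nn_integral_count_space_nat
  using suminf_offset[of f 1] by (simp add: summableI add.commute)

lemma reindex_lt:
  fixes H :: "nat \<Rightarrow> nat \<Rightarrow> ennreal"
  shows "(\<integral>\<^sup>+b. (\<Sum>t<b. H t b) \<partial>count_space UNIV)
       = (\<integral>\<^sup>+t. \<integral>\<^sup>+u. H t (t + 1 + u) \<partial>count_space UNIV \<partial>count_space UNIV)"
proof -
  have "(\<integral>\<^sup>+b. (\<Sum>t<b. H t b) \<partial>count_space UNIV) = (\<integral>\<^sup>+b. (\<Sum>t<Suc b. H t (Suc b)) \<partial>count_space UNIV)"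
    by (subst shift_nn) simp
  also have "\<dots> = (\<integral>\<^sup>+b. (\<Sum>t\<le>b. (\<lambda>t u. H t (t + 1 + u)) t (b - t)) \<partial>count_space UNIV)"
    by (intro nn_integral_cong sum.cong) (auto simp: lessThan_Suc_atMost)
  also have "\<dots> = (\<integral>\<^sup>+t. \<integral>\<^sup>+u. H t (t + 1 + u) \<partial>count_space UNIV \<partial>count_space UNIV)"
    by (subst cauchy_nn) simp
  finally show ?thesis .
qed



lemma en_eq:
  fixes a b c d :: real and X :: ennreal
  assumes "0\<le>a" "0\<le>b" "0\<le>c" "0\<le>d" "a*b = c*d"
  shows "ennreal a * (ennreal b * X) = ennreal c * (ennreal d * X)"
proof -
  have "ennreal a * (ennreal b * X) = ennreal (a*b) * X" using assms by (metis ennreal_mult mult.assoc)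
  also have "\<dots> = ennreal (c*d) * X" using assms by simp
  also have "\<dots> = ennreal c * (ennreal d * X)" using assms by (metis ennreal_mult mult.assoc)
  finally show ?thesis .
qed

lemma en_eq1:
  fixes a b c :: real and X :: ennreal
  assumes "0\<le>a" "0\<le>b" "0\<le>c" "a*b = c"
  shows "ennreal a * (ennreal b * X) = ennreal c * X"
  using assms by (metis ennreal_mult mult.assoc)

lemma key_abs:
  fixes x q r e sg s' s \<kappa> :: real and I :: "nat \<Rightarrow> nat \<Rightarrow> ennreal" and M :: "nat \<Rightarrow> ennreal"
  assumes s: "s = sg + s'" and xs: "x * s' = s * (q * r)" and x: "0 \<le> x" "x \<le> 1"
    and q: "0 \<le> q" "q \<le> 1" and r: "0 \<le> r" and e: "0 \<le> e" and sg: "0 \<le> sg" and s': "0 \<le> s'"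
    and \<kappa>: "q * s * e = \<kappa>"
  shows "(\<integral>\<^sup>+a. \<integral>\<^sup>+b. ennreal (x^a*(1-x) * (q^b*(1-q)) * (sg + (if a=0 then s' else 0))) *
             ((\<Sum>t<b. ennreal (r^t*e) * I (a+t) (b-t-1)) + ennreal (r^b) * M (a+b))
           \<partial>count_space UNIV \<partial>count_space UNIV)
       = ennreal \<kappa> * (\<integral>\<^sup>+a. \<integral>\<^sup>+b. ennreal (x^a*(1-x)*(q^b*(1-q))) * I a b \<partial>count_space UNIV \<partial>count_space UNIV)
         + ennreal s * (\<integral>\<^sup>+a. ennreal (x^a*(1-x)*(1-q)) * M a \<partial>count_space UNIV)"
proof -
  define w where "w a = sg + (if a=0 then s' else 0)" for a :: nat
  have w0: "0 \<le> w a" for a using sg s' by (simp add: w_def)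
  define Wr where "Wr a b = x^a*(1-x) * (q^b*(1-q)) * w a" for a b :: nat
  have Wr0: "0 \<le> Wr a b" for a b unfolding Wr_def using x q w0
    by (intro mult_nonneg_nonneg zero_le_power) auto
  define W where "W a b = ennreal (Wr a b)" for a b :: nat
  have s0: "0 \<le> s" using s sg s' by simp
  have x1: "0 \<le> 1 - x" and q1: "0 \<le> 1 - q" using x q by auto
  have split: "(\<integral>\<^sup>+a. \<integral>\<^sup>+b. W a b * ((\<Sum>t<b. ennreal (r^t*e) * I (a+t) (b-t-1)) + ennreal (r^b) * M (a+b))
           \<partial>count_space UNIV \<partial>count_space UNIV)
      = (\<integral>\<^sup>+a. \<integral>\<^sup>+b. W a b * (\<Sum>t<b. ennreal (r^t*e) * I (a+t) (b-t-1)) \<partial>count_space UNIV \<partial>count_space UNIV)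
      + (\<integral>\<^sup>+a. \<integral>\<^sup>+b. W a b * (ennreal (r^b) * M (a+b)) \<partial>count_space UNIV \<partial>count_space UNIV)"
    by (simp add: distrib_left nn_integral_add)
  have partM: "(\<integral>\<^sup>+a. \<integral>\<^sup>+b. W a b * (ennreal (r^b) * M (a+b)) \<partial>count_space UNIV \<partial>count_space UNIV)
     = ennreal s * (\<integral>\<^sup>+a. ennreal (x^a*(1-x)*(1-q)) * M a \<partial>count_space UNIV)"
  proof -
    have "(\<integral>\<^sup>+a. \<integral>\<^sup>+b. W a b * (ennreal (r^b) * M (a+b)) \<partial>count_space UNIV \<partial>count_space UNIV)
       = (\<integral>\<^sup>+a. \<integral>\<^sup>+b. ennreal ((1-x)*(1-q)) * (ennreal (x^a * w a * (q*r)^b) * M (a+b)) \<partial>count_space UNIV \<partial>count_space UNIV)"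
      unfolding W_def
    proof (intro nn_integral_cong)
      fix a b :: nat
      show "ennreal (Wr a b) * (ennreal (r^b) * M (a+b)) = ennreal ((1-x)*(1-q)) * (ennreal (x^a * w a * (q*r)^b) * M (a+b))"
        using Wr0 x1 q1 x q r w0
        by (intro en_eq) (auto simp: Wr_def power_mult_distrib ac_simps)
    qed
    also have "\<dots> = ennreal ((1-x)*(1-q)) * (\<integral>\<^sup>+a. \<integral>\<^sup>+b. (ennreal (x^a * w a * (q*r)^b) * M (a+b)) \<partial>count_space UNIV \<partial>count_space UNIV)"
      by (simp add: nn_integral_cmult)
    also have "(\<integral>\<^sup>+a. \<integral>\<^sup>+b. (ennreal (x^a * w a * (q*r)^b) * M (a+b)) \<partial>count_space UNIV \<partial>count_space UNIV)
        = ennreal s * (\<integral>\<^sup>+c. ennreal (x^c) * M c \<partial>count_space UNIV)"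
      unfolding w_def using s xs x q r sg s' by (intro conv_nn) auto
    also have "ennreal ((1-x)*(1-q)) * (ennreal s * (\<integral>\<^sup>+c. ennreal (x^c) * M c \<partial>count_space UNIV))
        = ennreal s * (\<integral>\<^sup>+c. ennreal ((1-x)*(1-q)) * (ennreal (x^c) * M c) \<partial>count_space UNIV)"
    proof -
      have "(\<integral>\<^sup>+c. ennreal ((1-x)*(1-q)) * (ennreal (x^c) * M c) \<partial>count_space UNIV)
          = ennreal ((1-x)*(1-q)) * (\<integral>\<^sup>+c. ennreal (x^c) * M c \<partial>count_space UNIV)"
        by (rule nn_integral_cmult) simp
      then show ?thesis by (simp add: ac_simps)
    qed
    also have "(\<integral>\<^sup>+c. ennreal ((1-x)*(1-q)) * (ennreal (x^c) * M c) \<partial>count_space UNIV)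
        = (\<integral>\<^sup>+a. ennreal (x^a*(1-x)*(1-q)) * M a \<partial>count_space UNIV)"
    proof (intro nn_integral_cong)
      fix c :: nat
      show "ennreal ((1-x)*(1-q)) * (ennreal (x^c) * M c) = ennreal (x^c*(1-x)*(1-q)) * M c"
        using x1 q1 x by (intro en_eq1) (auto simp: ac_simps)
    qed
    finally show ?thesis .
  qed
  define J where "J c = (\<integral>\<^sup>+u. ennreal (q^u) * I c u \<partial>count_space UNIV)" for c
  have partT: "(\<integral>\<^sup>+a. \<integral>\<^sup>+b. W a b * (\<Sum>t<b. ennreal (r^t*e) * I (a+t) (b-t-1)) \<partial>count_space UNIV \<partial>count_space UNIV)
      = ennreal \<kappa> * (\<integral>\<^sup>+a. \<integral>\<^sup>+b. ennreal (x^a*(1-x)*(q^b*(1-q))) * I a b \<partial>count_space UNIV \<partial>count_space UNIV)"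
  proof -
    have "(\<integral>\<^sup>+a. \<integral>\<^sup>+b. W a b * (\<Sum>t<b. ennreal (r^t*e) * I (a+t) (b-t-1)) \<partial>count_space UNIV \<partial>count_space UNIV)
       = (\<integral>\<^sup>+a. \<integral>\<^sup>+b. (\<Sum>t<b. W a b * (ennreal (r^t*e) * I (a+t) (b-t-1))) \<partial>count_space UNIV \<partial>count_space UNIV)"
      by (simp add: sum_distrib_left)
    also have "\<dots> = (\<integral>\<^sup>+a. \<integral>\<^sup>+t. \<integral>\<^sup>+u. W a (t+1+u) * (ennreal (r^t*e) * I (a+t) u) \<partial>count_space UNIV \<partial>count_space UNIV \<partial>count_space UNIV)"
      by (rule nn_integral_cong) (subst reindex_lt, simp)
    also have "\<dots> = (\<integral>\<^sup>+a. \<integral>\<^sup>+t. \<integral>\<^sup>+u. ennreal ((1-x)*(1-q)*q*e) * (ennreal (x^a * w a * (q*r)^t) * (ennreal (q^u) * I (a+t) u)) \<partial>count_space UNIV \<partial>count_space UNIV \<partial>count_space UNIV)"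
      unfolding W_def
    proof (intro nn_integral_cong)
      fix a t u :: nat
      have "ennreal (Wr a (t+1+u)) * (ennreal (r^t*e) * I (a+t) u) = ennreal (Wr a (t+1+u) * (r^t*e)) * I (a+t) u"
        using Wr0 r e by (intro en_eq1) auto
      also have "\<dots> = ennreal ((1-x)*(1-q)*q*e * (x^a * w a * (q*r)^t)) * (ennreal (q^u) * I (a+t) u)"
        using Wr0 r e x1 q1 x q w0 by (intro en_eq1[symmetric]) (auto simp: Wr_def power_mult_distrib power_add ac_simps)
      also have "\<dots> = ennreal ((1-x)*(1-q)*q*e) * (ennreal (x^a * w a * (q*r)^t) * (ennreal (q^u) * I (a+t) u))"
        using Wr0 r e x1 q1 x q w0 by (intro en_eq1[symmetric]) auto
      finally show "ennreal (Wr a (t+1+u)) * (ennreal (r^t*e) * I (a+t) u) = ennreal ((1-x)*(1-q)*q*e) * (ennreal (x^a * w a * (q*r)^t) * (ennreal (q^u) * I (a+t) u))" .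
    qed
    also have "\<dots> = ennreal ((1-x)*(1-q)*q*e) * (\<integral>\<^sup>+a. \<integral>\<^sup>+t. ennreal (x^a * w a * (q*r)^t) * J (a+t) \<partial>count_space UNIV \<partial>count_space UNIV)"
      unfolding J_def by (simp add: nn_integral_cmult)
    also have "(\<integral>\<^sup>+a. \<integral>\<^sup>+t. ennreal (x^a * w a * (q*r)^t) * J (a+t) \<partial>count_space UNIV \<partial>count_space UNIV)
        = ennreal s * (\<integral>\<^sup>+c. ennreal (x^c) * J c \<partial>count_space UNIV)"
      unfolding w_def using s xs x q r sg s' by (intro conv_nn) auto
    also have "ennreal ((1-x)*(1-q)*q*e) * (ennreal s * (\<integral>\<^sup>+c. ennreal (x^c) * J c \<partial>count_space UNIV))
       = ennreal \<kappa> * (ennreal ((1-x)*(1-q)) * (\<integral>\<^sup>+c. ennreal (x^c) * J c \<partial>count_space UNIV))"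
      using x1 q1 q e s0 \<kappa>[symmetric] by (intro en_eq) (auto simp: ac_simps)
    also have "ennreal ((1-x)*(1-q)) * (\<integral>\<^sup>+c. ennreal (x^c) * J c \<partial>count_space UNIV)
       = (\<integral>\<^sup>+c. \<integral>\<^sup>+u. ennreal ((1-x)*(1-q)) * (ennreal (x^c) * (ennreal (q^u) * I c u)) \<partial>count_space UNIV \<partial>count_space UNIV)"
      unfolding J_def by (simp add: nn_integral_cmult)
    also have "(\<integral>\<^sup>+c. \<integral>\<^sup>+u. ennreal ((1-x)*(1-q)) * (ennreal (x^c) * (ennreal (q^u) * I c u)) \<partial>count_space UNIV \<partial>count_space UNIV)
        = (\<integral>\<^sup>+a. \<integral>\<^sup>+b. ennreal (x^a*(1-x)*(q^b*(1-q))) * I a b \<partial>count_space UNIV \<partial>count_space UNIV)"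
    proof (intro nn_integral_cong)
      fix c u :: nat
      have "ennreal ((1-x)*(1-q)) * (ennreal (x^c) * (ennreal (q^u) * I c u)) = ennreal ((1-x)*(1-q)*x^c) * (ennreal (q^u) * I c u)"
        using x1 q1 x by (intro en_eq1) auto
      also have "\<dots> = ennreal (x^c*(1-x)*(q^u*(1-q))) * I c u"
        using x1 q1 x q by (intro en_eq1) (auto simp: ac_simps)
      finally show "ennreal ((1-x)*(1-q)) * (ennreal (x^c) * (ennreal (q^u) * I c u)) = ennreal (x^c*(1-x)*(q^u*(1-q))) * I c u" .
    qed
    finally show ?thesis .
  qed
  have "(\<integral>\<^sup>+a. \<integral>\<^sup>+b. ennreal (x^a*(1-x) * (q^b*(1-q)) * (sg + (if a=0 then s' else 0))) *
             ((\<Sum>t<b. ennreal (r^t*e) * I (a+t) (b-t-1)) + ennreal (r^b) * M (a+b))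
           \<partial>count_space UNIV \<partial>count_space UNIV)
     = (\<integral>\<^sup>+a. \<integral>\<^sup>+b. W a b * ((\<Sum>t<b. ennreal (r^t*e) * I (a+t) (b-t-1)) + ennreal (r^b) * M (a+b))
           \<partial>count_space UNIV \<partial>count_space UNIV)"
    unfolding W_def Wr_def w_def ..
  then show ?thesis
    using split partM partT by simp
qed



lemma mq_trans_unfold:
  assumes "1 \<le> j" "j < n"
  shows "mq_trans n d j = (if 0 < d j then
        bind_pmf (bernoulli_pmf (1 / real j))
          (\<lambda>b. if b then return_pmf (d(j := d j - 1))
               else mq_trans n (d(j := d j - 1, j - 1 := d (j - 1) + 1)) j)
      else mq_trans n d (Suc j))"
  using assms by (rule_tac trans[OF mq_trans.simps]) simp

lemma mq_trans_n:
  assumes "1 \<le> n"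
  shows "mq_trans n d n = map_pmf (\<lambda>k. d(n - 1 := d (n - 1) + k)) (geometric_pmf (1 / real n))"
  using assms by (rule_tac trans[OF mq_trans.simps]) simp

lemma loop:
  assumes j: "1 \<le> j" "j < n"
  shows "pmf (mq_trans n d j) d' =
     (\<Sum>t<d j. (1 - 1/real j)^t * (1/real j) * indicator {d(j := d j - t - 1, j-1 := d (j-1) + t)} d')
     + (1 - 1/real j)^(d j) * pmf (mq_trans n (d(j := 0, j-1 := d (j-1) + d j)) (Suc j)) d'"
proof (induction "d j" arbitrary: d)
  case 0
  then have "d(j := 0, j-1 := d (j-1) + d j) = d" by auto
  then show ?case using 0 j by (subst mq_trans_unfold) (auto simp flip: 0)
next
  case (Suc m)
  define d1 where "d1 = d(j := m, j - 1 := d (j - 1) + 1)"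
  have jj: "j - 1 \<noteq> j" using j by simp
  have d1j: "d1 j = m" using jj by (simp add: d1_def)
  have ej: "0 \<le> 1 / real j" "1 / real j \<le> 1" using j by auto
  have "pmf (mq_trans n d j) d' = (1/real j) * indicator {d(j := m)} d' + (1 - 1/real j) * pmf (mq_trans n d1 j) d'"
    using Suc(2)[symmetric] ej j unfolding d1_def
    by (subst mq_trans_unfold) (auto simp: pmf_bind pmf_return mult.commute split: split_indicator)
  also have "pmf (mq_trans n d1 j) d' =
     (\<Sum>t<m. (1 - 1/real j)^t * (1/real j) * indicator {d1(j := d1 j - t - 1, j-1 := d1 (j-1) + t)} d')
     + (1 - 1/real j)^m * pmf (mq_trans n (d1(j := 0, j-1 := d1 (j-1) + d1 j)) (Suc j)) d'"
    using Suc(1)[of d1] d1j by simp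
  also have "d1(j := 0, j-1 := d1 (j-1) + d1 j) = d(j := 0, j-1 := d (j-1) + d j)"
    using jj d1j Suc(2)[symmetric] by (simp add: d1_def)
  also have "(\<lambda>t. (1 - 1/real j)^t * (1/real j) * indicator {d1(j := d1 j - t - 1, j-1 := d1 (j-1) + t)} d')
      = (\<lambda>t. (1 - 1/real j)^t * (1/real j) * indicator {d(j := d j - Suc t - 1, j-1 := d (j-1) + Suc t)} d')"
    using jj d1j Suc(2)[symmetric] by (simp add: d1_def)
  finally have L: "pmf (mq_trans n d j) d' = (1/real j) * indicator {d(j := m)} d' + (1 - 1/real j) *
     ((\<Sum>t<m. (1 - 1/real j)^t * (1/real j) * indicator {d(j := d j - Suc t - 1, j-1 := d (j-1) + Suc t)} d')
     + (1 - 1/real j)^m * pmf (mq_trans n (d(j := 0, j-1 := d (j-1) + d j)) (Suc j)) d')" .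
  define f where "f t = (1 - 1/real j)^t * (1/real j) * indicator {d(j := d j - t - 1, j-1 := d (j-1) + t)} d'" for t
  have "(\<Sum>t<d j. f t) = f 0 + (\<Sum>t<m. f (Suc t))"
    unfolding Suc(2)[symmetric] by (rule sum.lessThan_Suc_shift)
  also have "f 0 = (1/real j) * indicator {d(j := m)} d'"
  proof -
    have "d(j := m, j-1 := d (j-1)) = d(j:=m)" using jj by (auto simp: fun_eq_iff)
    then show ?thesis unfolding f_def using Suc(2)[symmetric] by simp
  qed
  also have "(\<Sum>t<m. f (Suc t)) = (1 - 1/real j) * (\<Sum>t<m. (1 - 1/real j)^t * (1/real j) * indicator {d(j := d j - Suc t - 1, j-1 := d (j-1) + Suc t)} d')"
    unfolding f_def sum_distrib_left by (simp add: mult.assoc)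
  finally have R: "(\<Sum>t<d j. f t) = (1/real j) * indicator {d(j := m)} d' + (1 - 1/real j) * (\<Sum>t<m. (1 - 1/real j)^t * (1/real j) * indicator {d(j := d j - Suc t - 1, j-1 := d (j-1) + Suc t)} d')" .
  have P: "(1 - 1/real j)^(d j) = (1 - 1/real j) * (1 - 1/real j)^m" using Suc(2)[symmetric] by simp
  show ?case unfolding L f_def[symmetric] R P by (simp only: distrib_left mult.assoc add.assoc)
qed



lemma en3:
  fixes a b c :: real and X :: ennreal
  assumes "0\<le>a" "0\<le>b" "0\<le>c"
  shows "ennreal a * (ennreal b * (ennreal c * X)) = ennreal (a*b*c) * X"
  using assms by (simp add: ennreal_mult mult.assoc)

lemma nn_geom:
  fixes x :: real and f :: "nat \<Rightarrow> ennreal"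
  assumes "0 \<le> x" "x < 1"
  shows "(\<integral>\<^sup>+a. f a \<partial>geometric_pmf (1 - x)) = (\<integral>\<^sup>+a. ennreal (x^a * (1 - x)) * f a \<partial>count_space UNIV)"
  using assms by (simp add: nn_integral_measure_pmf pmf_geometric)

lemma key_pmf:
  fixes x q r e sg s' s \<kappa> :: real and I :: "nat \<Rightarrow> nat \<Rightarrow> ennreal" and M :: "nat \<Rightarrow> ennreal"
  assumes s: "s = sg + s'" and xs: "x * s' = s * (q * r)" and x: "0 \<le> x" "x < 1"
    and q: "0 \<le> q" "q < 1" and r: "0 \<le> r" and e: "0 \<le> e" and sg: "0 \<le> sg" and s': "0 \<le> s'"
    and \<kappa>: "q * s * e = \<kappa>"
  shows "(\<integral>\<^sup>+a. \<integral>\<^sup>+b. ennreal (sg + (if a=0 then s' else 0)) *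
             ((\<Sum>t<b. ennreal (r^t*e) * I (a+t) (b-t-1)) + ennreal (r^b) * M (a+b))
           \<partial>geometric_pmf (1-q) \<partial>geometric_pmf (1-x))
       = (\<integral>\<^sup>+a. \<integral>\<^sup>+b. ennreal \<kappa> * I a b + ennreal s * (indicator {0} b * M a)
           \<partial>geometric_pmf (1-q) \<partial>geometric_pmf (1-x))"
proof -
  have x1: "0 \<le> 1 - x" and q1: "0 \<le> 1 - q" using x q by auto
  have s0: "0 \<le> s" using s sg s' by simp
  have k0: "0 \<le> \<kappa>" using \<kappa>[symmetric] q s0 e by simp
  have pa: "0 \<le> x^a * (1-x)" for a using x1 x by simp
  have pb: "0 \<le> q^b * (1-q)" for b using q1 q by simp
  have w0: "0 \<le> sg + (if a=0 then s' else 0)" for a :: nat using sg s' by simp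
  have "(\<integral>\<^sup>+a. \<integral>\<^sup>+b. ennreal (sg + (if a=0 then s' else 0)) *
             ((\<Sum>t<b. ennreal (r^t*e) * I (a+t) (b-t-1)) + ennreal (r^b) * M (a+b))
           \<partial>geometric_pmf (1-q) \<partial>geometric_pmf (1-x))
      = (\<integral>\<^sup>+a. ennreal (x^a * (1 - x)) * (\<integral>\<^sup>+b. ennreal (q^b * (1 - q)) * (ennreal (sg + (if a=0 then s' else 0)) *
             ((\<Sum>t<b. ennreal (r^t*e) * I (a+t) (b-t-1)) + ennreal (r^b) * M (a+b))) \<partial>count_space UNIV) \<partial>count_space UNIV)"
    using x q by (simp add: nn_geom)
  also have "\<dots> = (\<integral>\<^sup>+a. \<integral>\<^sup>+b. ennreal (x^a*(1-x) * (q^b*(1-q)) * (sg + (if a=0 then s' else 0))) *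
             ((\<Sum>t<b. ennreal (r^t*e) * I (a+t) (b-t-1)) + ennreal (r^b) * M (a+b))
           \<partial>count_space UNIV \<partial>count_space UNIV)"
  proof (rule nn_integral_cong)
    fix a :: nat
    have "ennreal (x^a * (1 - x)) * (\<integral>\<^sup>+b. ennreal (q^b * (1 - q)) * (ennreal (sg + (if a=0 then s' else 0)) *
             ((\<Sum>t<b. ennreal (r^t*e) * I (a+t) (b-t-1)) + ennreal (r^b) * M (a+b))) \<partial>count_space UNIV)
       = (\<integral>\<^sup>+b. ennreal (x^a * (1 - x)) * (ennreal (q^b * (1 - q)) * (ennreal (sg + (if a=0 then s' else 0)) *
             ((\<Sum>t<b. ennreal (r^t*e) * I (a+t) (b-t-1)) + ennreal (r^b) * M (a+b)))) \<partial>count_space UNIV)"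
      by (rule nn_integral_cmult[symmetric]) simp
    also have "\<dots> = (\<integral>\<^sup>+b. ennreal (x^a*(1-x) * (q^b*(1-q)) * (sg + (if a=0 then s' else 0))) *
             ((\<Sum>t<b. ennreal (r^t*e) * I (a+t) (b-t-1)) + ennreal (r^b) * M (a+b)) \<partial>count_space UNIV)"
    proof (rule nn_integral_cong)
      fix b :: nat
      show "ennreal (x^a * (1 - x)) * (ennreal (q^b * (1 - q)) * (ennreal (sg + (if a=0 then s' else 0)) *
             ((\<Sum>t<b. ennreal (r^t*e) * I (a+t) (b-t-1)) + ennreal (r^b) * M (a+b)))) =
            ennreal (x^a*(1-x) * (q^b*(1-q)) * (sg + (if a=0 then s' else 0))) *
             ((\<Sum>t<b. ennreal (r^t*e) * I (a+t) (b-t-1)) + ennreal (r^b) * M (a+b))"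
        using pa[of a] pb[of b] w0[of a] by (intro en3) auto
    qed
    finally show "ennreal (x^a * (1 - x)) * (\<integral>\<^sup>+b. ennreal (q^b * (1 - q)) * (ennreal (sg + (if a=0 then s' else 0)) *
             ((\<Sum>t<b. ennreal (r^t*e) * I (a+t) (b-t-1)) + ennreal (r^b) * M (a+b))) \<partial>count_space UNIV)
       = (\<integral>\<^sup>+b. ennreal (x^a*(1-x) * (q^b*(1-q)) * (sg + (if a=0 then s' else 0))) *
             ((\<Sum>t<b. ennreal (r^t*e) * I (a+t) (b-t-1)) + ennreal (r^b) * M (a+b)) \<partial>count_space UNIV)" .
  qed
  also have "\<dots> = ennreal \<kappa> * (\<integral>\<^sup>+a. \<integral>\<^sup>+b. ennreal (x^a*(1-x)*(q^b*(1-q))) * I a b \<partial>count_space UNIV \<partial>count_space UNIV)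
         + ennreal s * (\<integral>\<^sup>+a. ennreal (x^a*(1-x)*(1-q)) * M a \<partial>count_space UNIV)"
    using assms by (intro key_abs) auto
  also have "\<dots> = (\<integral>\<^sup>+a. \<integral>\<^sup>+b. ennreal \<kappa> * I a b + ennreal s * (indicator {0} b * M a)
           \<partial>geometric_pmf (1-q) \<partial>geometric_pmf (1-x))"
  proof -
    have inner: "(\<integral>\<^sup>+b. ennreal \<kappa> * I a b + ennreal s * (indicator {0} b * M a) \<partial>geometric_pmf (1-q))
        = ennreal \<kappa> * (\<integral>\<^sup>+b. I a b \<partial>geometric_pmf (1-q)) + ennreal s * (ennreal (1-q) * M a)" for a
    proof -
      have "(\<integral>\<^sup>+b. ennreal \<kappa> * I a b + ennreal s * (indicator {0} b * M a) \<partial>geometric_pmf (1-q))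
          = ennreal \<kappa> * (\<integral>\<^sup>+b. I a b \<partial>geometric_pmf (1-q)) + ennreal s * (\<integral>\<^sup>+b. M a * indicator {0} b \<partial>geometric_pmf (1-q))"
        by (simp add: nn_integral_add nn_integral_cmult mult.commute)
      also have "(\<integral>\<^sup>+b. M a * indicator {0} b \<partial>geometric_pmf (1-q)) = M a * emeasure (measure_pmf (geometric_pmf (1-q))) {0}"
        by (rule nn_integral_indicator_singleton) simp
      also have "emeasure (measure_pmf (geometric_pmf (1-q))) {0} = ennreal (1-q)"
        using q by (simp add: emeasure_pmf_single pmf_geometric)
      finally show ?thesis by (simp add: mult.commute)
    qed
    have "(\<integral>\<^sup>+a. \<integral>\<^sup>+b. ennreal \<kappa> * I a b + ennreal s * (indicator {0} b * M a)
           \<partial>geometric_pmf (1-q) \<partial>geometric_pmf (1-x))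
        = (\<integral>\<^sup>+a. ennreal \<kappa> * (\<integral>\<^sup>+b. I a b \<partial>geometric_pmf (1-q)) + ennreal s * (ennreal (1-q) * M a) \<partial>geometric_pmf (1-x))"
      by (simp add: inner)
    also have "\<dots> = ennreal \<kappa> * (\<integral>\<^sup>+a. \<integral>\<^sup>+b. I a b \<partial>geometric_pmf (1-q) \<partial>geometric_pmf (1-x))
                  + ennreal s * (\<integral>\<^sup>+a. ennreal (1-q) * M a \<partial>geometric_pmf (1-x))"
      by (simp add: nn_integral_add nn_integral_cmult)
    also have "(\<integral>\<^sup>+a. \<integral>\<^sup>+b. I a b \<partial>geometric_pmf (1-q) \<partial>geometric_pmf (1-x))
        = (\<integral>\<^sup>+a. \<integral>\<^sup>+b. ennreal (x^a*(1-x)*(q^b*(1-q))) * I a b \<partial>count_space UNIV \<partial>count_space UNIV)"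
    proof -
      have "(\<integral>\<^sup>+a. \<integral>\<^sup>+b. I a b \<partial>geometric_pmf (1-q) \<partial>geometric_pmf (1-x))
         = (\<integral>\<^sup>+a. ennreal (x^a * (1 - x)) * (\<integral>\<^sup>+b. ennreal (q^b * (1 - q)) * I a b \<partial>count_space UNIV) \<partial>count_space UNIV)"
        using x q by (simp add: nn_geom)
      also have "\<dots> = (\<integral>\<^sup>+a. \<integral>\<^sup>+b. ennreal (x^a * (1 - x)) * (ennreal (q^b * (1 - q)) * I a b) \<partial>count_space UNIV \<partial>count_space UNIV)"
        by (simp add: nn_integral_cmult)
      also have "\<dots> = (\<integral>\<^sup>+a. \<integral>\<^sup>+b. ennreal (x^a*(1-x)*(q^b*(1-q))) * I a b \<partial>count_space UNIV \<partial>count_space UNIV)"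
        using pa pb by (intro nn_integral_cong en_eq1) auto
      finally show ?thesis .
    qed
    also have "(\<integral>\<^sup>+a. ennreal (1-q) * M a \<partial>geometric_pmf (1-x)) = (\<integral>\<^sup>+a. ennreal (x^a*(1-x)*(1-q)) * M a \<partial>count_space UNIV)"
      using x q pa q1 by (simp add: nn_geom ennreal_mult mult.assoc)
    finally show ?thesis by simp
  qed
  finally show ?thesis .
qed

lemma key_pmf_n:
  fixes x y e sg s' s \<kappa> :: real and I :: "nat \<Rightarrow> ennreal"
  assumes s: "s = sg + s'" and xs: "x * s' = s * y" and x: "0 \<le> x" "x < 1"
    and y: "0 \<le> y" and e: "0 \<le> e" and sg: "0 \<le> sg" and s': "0 \<le> s'"
    and \<kappa>: "s * e = \<kappa>"
  shows "(\<integral>\<^sup>+a. ennreal (sg + (if a=0 then s' else 0)) * (\<integral>\<^sup>+k. ennreal (y^k*e) * I (a+k) \<partial>count_space UNIV)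
           \<partial>geometric_pmf (1-x))
       = (\<integral>\<^sup>+a. ennreal \<kappa> * I a \<partial>geometric_pmf (1-x))"
proof -
  have x1: "0 \<le> 1 - x" using x by auto
  have pa: "0 \<le> x^a * (1-x)" for a using x1 x by simp
  have w0: "0 \<le> sg + (if a=0 then s' else 0)" for a :: nat using sg s' by simp
  have s0: "0 \<le> s" using s sg s' by simp
  have "(\<integral>\<^sup>+a. ennreal (sg + (if a=0 then s' else 0)) * (\<integral>\<^sup>+k. ennreal (y^k*e) * I (a+k) \<partial>count_space UNIV)
           \<partial>geometric_pmf (1-x))
     = (\<integral>\<^sup>+a. \<integral>\<^sup>+k. ennreal ((1-x)*e) * (ennreal (x^a * (sg + (if a=0 then s' else 0)) * y^k) * I (a+k)) \<partial>count_space UNIV \<partial>count_space UNIV)"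
  proof -
    have "(\<integral>\<^sup>+a. ennreal (sg + (if a=0 then s' else 0)) * (\<integral>\<^sup>+k. ennreal (y^k*e) * I (a+k) \<partial>count_space UNIV)
           \<partial>geometric_pmf (1-x))
       = (\<integral>\<^sup>+a. ennreal (x^a * (1-x)) * (ennreal (sg + (if a=0 then s' else 0)) * (\<integral>\<^sup>+k. ennreal (y^k*e) * I (a+k) \<partial>count_space UNIV)) \<partial>count_space UNIV)"
      using x by (simp add: nn_geom)
    also have "\<dots> = (\<integral>\<^sup>+a. \<integral>\<^sup>+k. ennreal (x^a * (1-x)) * (ennreal (sg + (if a=0 then s' else 0)) * (ennreal (y^k*e) * I (a+k))) \<partial>count_space UNIV \<partial>count_space UNIV)"
      by (simp add: nn_integral_cmult)
    also have "\<dots> = (\<integral>\<^sup>+a. \<integral>\<^sup>+k. ennreal ((1-x)*e) * (ennreal (x^a * (sg + (if a=0 then s' else 0)) * y^k) * I (a+k)) \<partial>count_space UNIV \<partial>count_space UNIV)"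
    proof (intro nn_integral_cong)
      fix a k :: nat
      have "ennreal (x^a * (1-x)) * (ennreal (sg + (if a=0 then s' else 0)) * (ennreal (y^k*e) * I (a+k)))
          = ennreal (x^a * (1-x) * (sg + (if a=0 then s' else 0)) * (y^k*e)) * I (a+k)"
        using pa[of a] w0[of a] y e by (intro en3) auto
      also have "\<dots> = ennreal ((1-x)*e) * (ennreal (x^a * (sg + (if a=0 then s' else 0)) * y^k) * I (a+k))"
        using pa[of a] w0[of a] y e x1 x by (intro en_eq1[symmetric]) (auto simp: ac_simps)
      finally show "ennreal (x^a * (1-x)) * (ennreal (sg + (if a=0 then s' else 0)) * (ennreal (y^k*e) * I (a+k)))
          = ennreal ((1-x)*e) * (ennreal (x^a * (sg + (if a=0 then s' else 0)) * y^k) * I (a+k))" .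
    qed
    finally show ?thesis .
  qed
  also have "\<dots> = ennreal ((1-x)*e) * (\<integral>\<^sup>+a. \<integral>\<^sup>+k. ennreal (x^a * (sg + (if a=0 then s' else 0)) * y^k) * I (a+k) \<partial>count_space UNIV \<partial>count_space UNIV)"
    by (simp add: nn_integral_cmult)
  also have "(\<integral>\<^sup>+a. \<integral>\<^sup>+k. ennreal (x^a * (sg + (if a=0 then s' else 0)) * y^k) * I (a+k) \<partial>count_space UNIV \<partial>count_space UNIV)
      = ennreal s * (\<integral>\<^sup>+c. ennreal (x^c) * I c \<partial>count_space UNIV)"
    using assms by (intro conv_nn) auto
  also have "ennreal ((1-x)*e) * (ennreal s * (\<integral>\<^sup>+c. ennreal (x^c) * I c \<partial>count_space UNIV))
      = ennreal \<kappa> * (\<integral>\<^sup>+c. ennreal (x^c * (1-x)) * I c \<partial>count_space UNIV)"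
  proof -
    have "ennreal ((1-x)*e) * (ennreal s * (\<integral>\<^sup>+c. ennreal (x^c) * I c \<partial>count_space UNIV))
        = ennreal \<kappa> * (ennreal (1-x) * (\<integral>\<^sup>+c. ennreal (x^c) * I c \<partial>count_space UNIV))"
      using x1 e s0 \<kappa>[symmetric] by (intro en_eq) (auto simp: ac_simps)
    also have "ennreal (1-x) * (\<integral>\<^sup>+c. ennreal (x^c) * I c \<partial>count_space UNIV)
        = (\<integral>\<^sup>+c. ennreal (x^c * (1-x)) * I c \<partial>count_space UNIV)"
      using x1 x by (subst nn_integral_cmult[symmetric]) (auto intro!: nn_integral_cong simp: ennreal_mult mult_ac)
    finally show ?thesis .
  qed
  also have "\<dots> = (\<integral>\<^sup>+a. ennreal \<kappa> * I a \<partial>geometric_pmf (1-x))"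
    using x by (simp add: nn_geom nn_integral_cmult[symmetric] mult_ac)
  finally show ?thesis .
qed



lemma nn_swap_pmf:
  fixes f :: "'a \<Rightarrow> 'b \<Rightarrow> ennreal" and A :: "'a pmf" and B :: "'b pmf"
  shows "(\<integral>\<^sup>+a. \<integral>\<^sup>+b. f a b \<partial>B \<partial>A) = (\<integral>\<^sup>+b. \<integral>\<^sup>+a. f a b \<partial>A \<partial>B)"
proof -
  have "(\<integral>\<^sup>+a. \<integral>\<^sup>+b. f a b \<partial>B \<partial>A) = (\<integral>\<^sup>+p. f (fst p) (snd p) \<partial>pair_pmf A B)"
    by (simp add: nn_integral_pair_pmf')
  also have "\<dots> = (\<integral>\<^sup>+p. f (snd p) (fst p) \<partial>pair_pmf B A)"
    by (subst pair_commute_pmf) (simp add: case_prod_beta)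
  also have "\<dots> = (\<integral>\<^sup>+b. \<integral>\<^sup>+a. f a b \<partial>A \<partial>B)"
    by (simp add: nn_integral_pair_pmf')
  finally show ?thesis .
qed

lemma nn_Pi_insert:
  fixes F :: "('a \<Rightarrow> 'b) \<Rightarrow> ennreal"
  assumes "finite A" "x \<notin> A"
  shows "(\<integral>\<^sup>+d. F d \<partial>Pi_pmf (insert x A) dflt p) = (\<integral>\<^sup>+g. \<integral>\<^sup>+a. F (g(x := a)) \<partial>p x \<partial>Pi_pmf A dflt p)"
  using assms by (simp add: Pi_pmf_insert nn_integral_pair_pmf' case_prod_beta nn_swap_pmf[of _ "Pi_pmf A dflt p"])

definition sP :: "nat pmf \<Rightarrow> nat \<Rightarrow> real" where
  "sP \<sigma> i = measure_pmf.prob \<sigma> {..i}"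
definition qP :: "nat \<Rightarrow> nat pmf \<Rightarrow> nat \<Rightarrow> real" where
  "qP n \<sigma> i = real i / (real n * sP \<sigma> i)"
definition GP :: "nat \<Rightarrow> nat pmf \<Rightarrow> nat \<Rightarrow> nat pmf" where
  "GP n \<sigma> i = geometric_pmf (1 - qP n \<sigma> i)"

locale mqloc =
  fixes n :: nat and \<sigma> :: "nat pmf"
  assumes supp: "set_pmf \<sigma> \<subseteq> {1..n}"
    and big: "\<forall>i\<in>{1..n-1}. measure_pmf.prob \<sigma> {..i} > real i / real n"
begin

lemma n1: "1 \<le> n"
  using supp set_pmf_not_empty[of \<sigma>] by fastforce

lemma sP_sum: "sP \<sigma> i = (\<Sum>k\<le>i. pmf \<sigma> k)"
  unfolding sP_def by (simp add: measure_measure_pmf_finite)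

lemma pmf0: "pmf \<sigma> 0 = 0"
  using supp by (auto simp: set_pmf_iff)

lemma sP0: "sP \<sigma> 0 = 0"
  by (simp add: sP_sum pmf0)

lemma sP_n: "sP \<sigma> n = 1"
  unfolding sP_sum using supp by (intro sum_pmf_eq_1) auto

lemma sP_step: "1 \<le> j \<Longrightarrow> sP \<sigma> j = pmf \<sigma> j + sP \<sigma> (j - 1)"
  unfolding sP_sum by (cases j) (auto simp: atMost_Suc)

lemma sP_nonneg: "0 \<le> sP \<sigma> j"
  unfolding sP_sum by (simp add: sum_nonneg)

lemma sP_big: "1 \<le> i \<Longrightarrow> i \<le> n - 1 \<Longrightarrow> real i / real n < sP \<sigma> i"
  using big unfolding sP_def by auto

lemma qP0: "qP n \<sigma> 0 = 0"
  by (simp add: qP_def)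

lemma qP_range: "i \<le> n - 1 \<Longrightarrow> 0 \<le> qP n \<sigma> i \<and> qP n \<sigma> i < 1"
proof (cases "i = 0")
  case True then show ?thesis by (simp add: qP0)
next
  case False
  assume i: "i \<le> n - 1"
  have n0: "0 < real n" using n1 by simp
  have "real i / real n < sP \<sigma> i" using sP_big[of i] False i by simp
  then have "real i < real n * sP \<sigma> i" using n0 by (simp add: field_simps)
  moreover have "0 < real n * sP \<sigma> i" using n0 \<open>real i / real n < sP \<sigma> i\<close> False
    by (metis divide_nonneg_pos le_less_trans mult_pos_pos of_nat_0_le_iff)
  ultimately show ?thesis unfolding qP_def by (simp add: divide_less_eq)
qed

lemma pmf_GP: "i \<le> n - 1 \<Longrightarrow> pmf (GP n \<sigma> i) k = qP n \<sigma> i ^ k * (1 - qP n \<sigma> i)"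
  using qP_range[of i] unfolding GP_def by (subst pmf_geometric) auto

abbreviation "\<pi> \<equiv> Pi_pmf {1..n-1} 0 (GP n \<sigma>)"

lemma pi_ext: "\<pi> = Pi_pmf {..<n} 0 (GP n \<sigma>)"
proof (rule pmf_eqI)
  fix f :: "nat \<Rightarrow> nat"
  have e: "{..<n} = insert 0 {1..n-1}" using n1 by auto
  have G0: "GP n \<sigma> 0 = return_pmf 0" by (simp add: GP_def qP0)
  show "pmf \<pi> f = pmf (Pi_pmf {..<n} 0 (GP n \<sigma>)) f"
  proof -
    have a: "pmf (Pi_pmf {..<n} 0 (GP n \<sigma>)) f = (if \<forall>x. x \<notin> insert 0 {1..n-1} \<longrightarrow> f x = 0 then \<Prod>x\<in>insert 0 {1..n-1}. pmf (GP n \<sigma> x) (f x) else 0)"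
      unfolding e[symmetric] by (rule pmf_Pi) simp
    have b: "pmf \<pi> f = (if \<forall>x. x \<notin> {1..n-1} \<longrightarrow> f x = 0 then \<Prod>x\<in>{1..n-1}. pmf (GP n \<sigma> x) (f x) else 0)"
      by (rule pmf_Pi) simp
    show ?thesis unfolding a b by (auto simp: G0 indicator_def Suc_le_eq)
  qed
qed

end



declare mq_trans.simps[simp del]

context mqloc
begin

definition Lf :: "(nat \<Rightarrow> nat) \<Rightarrow> nat \<Rightarrow> (nat \<Rightarrow> nat) \<Rightarrow> ennreal" where
  "Lf d' j d = ennreal (pmf \<sigma> j + (if d (j-1) = 0 then sP \<sigma> (j-1) else 0)) * ennreal (pmf (mq_trans n d j) d')"

definition Rf :: "(nat \<Rightarrow> nat) \<Rightarrow> nat \<Rightarrow> (nat \<Rightarrow> nat) \<Rightarrow> ennreal" where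
  "Rf d' j d = ennreal (1 / real n) * indicator {d'} d
     + ennreal (sP \<sigma> j) * (indicator {0} (d j) * ennreal (pmf (mq_trans n d (Suc j)) d'))"

lemma dec2:
  assumes j: "1 \<le> j" "j \<le> n - 1"
  shows "(\<integral>\<^sup>+d. F d \<partial>\<pi>) = (\<integral>\<^sup>+g. \<integral>\<^sup>+a. \<integral>\<^sup>+b. F (g(j := b, j-1 := a))
            \<partial>GP n \<sigma> j \<partial>GP n \<sigma> (j-1) \<partial>Pi_pmf ({..<n} - {j-1, j}) 0 (GP n \<sigma>))"
proof -
  let ?R = "{..<n} - {j-1, j}"
  have e: "{..<n} = insert (j-1) (insert j ?R)" using j by auto
  have "(\<integral>\<^sup>+d. F d \<partial>\<pi>) = (\<integral>\<^sup>+d. F d \<partial>Pi_pmf (insert (j-1) (insert j ?R)) 0 (GP n \<sigma>))"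
    using pi_ext e by simp
  also have "\<dots> = (\<integral>\<^sup>+g. \<integral>\<^sup>+a. F (g(j-1 := a)) \<partial>GP n \<sigma> (j-1) \<partial>Pi_pmf (insert j ?R) 0 (GP n \<sigma>))"
    using j by (intro nn_Pi_insert) auto
  also have "\<dots> = (\<integral>\<^sup>+g. \<integral>\<^sup>+b. \<integral>\<^sup>+a. F (g(j := b, j-1 := a)) \<partial>GP n \<sigma> (j-1) \<partial>GP n \<sigma> j \<partial>Pi_pmf ?R 0 (GP n \<sigma>))"
    by (rule nn_Pi_insert) auto
  also have "\<dots> = (\<integral>\<^sup>+g. \<integral>\<^sup>+a. \<integral>\<^sup>+b. F (g(j := b, j-1 := a)) \<partial>GP n \<sigma> j \<partial>GP n \<sigma> (j-1) \<partial>Pi_pmf ?R 0 (GP n \<sigma>))"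
    by (intro nn_integral_cong nn_swap_pmf)
  finally show ?thesis .
qed

lemma dec1:
  shows "(\<integral>\<^sup>+d. F d \<partial>\<pi>) = (\<integral>\<^sup>+g. \<integral>\<^sup>+a. F (g(n-1 := a))
            \<partial>GP n \<sigma> (n-1) \<partial>Pi_pmf {..<n-1} 0 (GP n \<sigma>))"
proof -
  have e: "{..<n} = insert (n-1) {..<n-1}" using n1 by auto
  have "(\<integral>\<^sup>+d. F d \<partial>\<pi>) = (\<integral>\<^sup>+d. F d \<partial>Pi_pmf (insert (n-1) {..<n-1}) 0 (GP n \<sigma>))"
    using pi_ext e by simp
  also have "\<dots> = (\<integral>\<^sup>+g. \<integral>\<^sup>+a. F (g(n-1 := a)) \<partial>GP n \<sigma> (n-1) \<partial>Pi_pmf {..<n-1} 0 (GP n \<sigma>))"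
    by (intro nn_Pi_insert) auto
  finally show ?thesis .
qed

lemma key_j:
  assumes j: "1 \<le> j" "j \<le> n - 1"
  shows "(\<integral>\<^sup>+d. Lf d' j d \<partial>\<pi>) = (\<integral>\<^sup>+d. Rf d' j d \<partial>\<pi>)"
proof -
  have jn: "j < n" using j n1 by simp
  have jj: "j - 1 \<noteq> j" using j by simp
  define x where "x = qP n \<sigma> (j-1)"
  define q where "q = qP n \<sigma> j"
  define r where "r = 1 - 1 / real j"
  define e where "e = 1 / real j"
  define sg where "sg = pmf \<sigma> j"
  define s' where "s' = sP \<sigma> (j-1)"
  define s where "s = sP \<sigma> j"
  have x: "0 \<le> x" "x < 1" using qP_range[of "j-1"] j unfolding x_def by auto
  have q: "0 \<le> q" "q < 1" using qP_range[of j] j unfolding q_def by auto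
  have r: "0 \<le> r" using j unfolding r_def by (simp add: field_simps)
  have e: "0 \<le> e" unfolding e_def by simp
  have sg: "0 \<le> sg" unfolding sg_def by simp
  have s': "0 \<le> s'" unfolding s'_def by (rule sP_nonneg)
  have ss: "s = sg + s'" unfolding s_def sg_def s'_def using sP_step[OF j(1)] by simp
  have spos: "0 < s"
  proof -
    have "0 \<le> real j / real n" by simp
    then show ?thesis using sP_big[OF j] unfolding s_def by linarith
  qed
  have n0: "0 < real n" using n1 by simp
  have xs: "x * s' = s * (q * r)"
  proof (cases "j = 1")
    case True then show ?thesis by (simp add: x_def r_def qP0)
  next
    case False
    have s'pos: "0 < s'"
    proof -
      have "0 \<le> real (j-1) / real n" by simp
      moreover have "real (j-1) / real n < sP \<sigma> (j-1)" using sP_big[of "j-1"] j False by simp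
      ultimately show ?thesis unfolding s'_def by linarith
    qed
    have "x * s' = (real j - 1) / real n"
      unfolding x_def qP_def s'_def[symmetric] using s'pos n0 j by (simp add: field_simps of_nat_diff)
    moreover have "s * (q * r) = (real j - 1) / real n"
      unfolding q_def qP_def s_def[symmetric] r_def using spos n0 j by (simp add: field_simps)
    ultimately show ?thesis by simp
  qed
  have \<kappa>: "q * s * e = 1 / real n"
    unfolding q_def qP_def s_def[symmetric] e_def using spos n0 j by (simp add: field_simps)
  show ?thesis
  proof (subst (1 2) dec2[OF j], rule nn_integral_cong)
    fix g :: "nat \<Rightarrow> nat"
    define D where "D a b = g(j := b, j-1 := a)" for a b
    define I where "I c u = ennreal (indicator {D c u} d')" for c u
    define M where "M c = ennreal (pmf (mq_trans n (D c 0) (Suc j)) d')" for c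
    have Dj: "D a b j = b" "D a b (j-1) = a" for a b unfolding D_def using jj by auto
    have Dupd: "(D a b)(j := v, j-1 := w) = D w v" for a b v w
      unfolding D_def using jj by (auto simp: fun_eq_iff)
    have L: "Lf d' j (D a b) = ennreal (sg + (if a=0 then s' else 0)) *
             ((\<Sum>t<b. ennreal (r^t*e) * I (a+t) (b-t-1)) + ennreal (r^b) * M (a+b))" for a b
    proof -
      have "pmf (mq_trans n (D a b) j) d' = (\<Sum>t<b. r^t * e * indicator {D (a+t) (b-t-1)} d') + r^b * pmf (mq_trans n (D (a+b) 0) (Suc j)) d'"
        using loop[OF j(1) jn, of "D a b" d'] unfolding Dj Dupd r_def e_def by simp
      have "ennreal (pmf (mq_trans n (D a b) j) d') = (\<Sum>t<b. ennreal (r^t*e) * I (a+t) (b-t-1)) + ennreal (r^b) * M (a+b)"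
      proof -
        have nn1: "0 \<le> (\<Sum>t<b. r^t * e * indicator {D (a+t) (b-t-1)} d')" using r e by (intro sum_nonneg) simp
        have nn2: "0 \<le> r^b * pmf (mq_trans n (D (a+b) 0) (Suc j)) d'" using r by simp
        have "ennreal (\<Sum>t<b. r^t * e * indicator {D (a+t) (b-t-1)} d') = (\<Sum>t<b. ennreal (r^t * e * indicator {D (a+t) (b-t-1)} d'))"
          using r e by (intro sum_ennreal[symmetric]) simp
        also have "\<dots> = (\<Sum>t<b. ennreal (r^t*e) * I (a+t) (b-t-1))"
          unfolding I_def using r e by (intro sum.cong refl ennreal_mult) auto
        finally have A: "ennreal (\<Sum>t<b. r^t * e * indicator {D (a+t) (b-t-1)} d') = (\<Sum>t<b. ennreal (r^t*e) * I (a+t) (b-t-1))" .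
        have B: "ennreal (r^b * pmf (mq_trans n (D (a+b) 0) (Suc j)) d') = ennreal (r^b) * M (a+b)"
          unfolding M_def using r by (intro ennreal_mult) auto
        show ?thesis unfolding \<open>pmf (mq_trans n (D a b) j) d' = _\<close> ennreal_plus[OF nn1 nn2] A B ..
      qed
      then show ?thesis unfolding Lf_def Dj sg_def s'_def by simp
    qed
    have R: "Rf d' j (D a b) = ennreal (1 / real n) * I a b + ennreal s * (indicator {0} b * M a)" for a b
      unfolding Rf_def Dj I_def M_def s_def by (auto split: split_indicator)
    have G: "GP n \<sigma> (j-1) = geometric_pmf (1 - x)" "GP n \<sigma> j = geometric_pmf (1 - q)"
      unfolding GP_def x_def q_def by simp_all
    show "(\<integral>\<^sup>+a. \<integral>\<^sup>+b. Lf d' j (g(j := b, j - 1 := a)) \<partial>GP n \<sigma> j \<partial>GP n \<sigma> (j - 1)) =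
          (\<integral>\<^sup>+a. \<integral>\<^sup>+b. Rf d' j (g(j := b, j - 1 := a)) \<partial>GP n \<sigma> j \<partial>GP n \<sigma> (j - 1))"
      unfolding D_def[symmetric] L R G
      using ss xs x q r e sg s' \<kappa> by (intro key_pmf) auto
  qed
qed


lemma key_n:
  shows "(\<integral>\<^sup>+d. Lf d' n d \<partial>\<pi>) = (\<integral>\<^sup>+d. ennreal (1 / real n) * indicator {d'} d \<partial>\<pi>)"
proof -
  define x where "x = qP n \<sigma> (n-1)"
  define y where "y = 1 - 1 / real n"
  define e where "e = 1 / real n"
  define sg where "sg = pmf \<sigma> n"
  define s' where "s' = sP \<sigma> (n-1)"
  have n0: "0 < real n" using n1 by simp
  have x: "0 \<le> x" "x < 1" using qP_range[of "n-1"] unfolding x_def by auto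
  have y: "0 \<le> y" using n1 unfolding y_def by (simp add: field_simps)
  have e: "0 \<le> e" unfolding e_def by simp
  have sg: "0 \<le> sg" unfolding sg_def by simp
  have s': "0 \<le> s'" unfolding s'_def by (rule sP_nonneg)
  have ss: "1 = sg + s'" unfolding sg_def s'_def using sP_step[OF n1] sP_n by simp
  have xs: "x * s' = 1 * y"
  proof (cases "n = 1")
    case True then show ?thesis using qP0 by (simp add: x_def y_def)
  next
    case False
    have s'pos: "0 < s'"
    proof -
      have "0 \<le> real (n-1) / real n" by simp
      moreover have "real (n-1) / real n < sP \<sigma> (n-1)" using sP_big[of "n-1"] n1 False by simp
      ultimately show ?thesis unfolding s'_def by linarith
    qed
    show ?thesis
      unfolding x_def qP_def s'_def[symmetric] y_def using s'pos n0 n1 by (simp add: field_simps of_nat_diff)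
  qed
  have \<kappa>: "1 * e = 1 / real n" unfolding e_def by simp
  show ?thesis
  proof (subst (1 2) dec1, rule nn_integral_cong)
    fix g :: "nat \<Rightarrow> nat"
    define D where "D a = g(n-1 := a)" for a
    define I where "I c = ennreal (indicator {D c} d')" for c
    have L: "Lf d' n (D a) = ennreal (sg + (if a=0 then s' else 0)) *
             (\<integral>\<^sup>+k. ennreal (y^k*e) * I (a+k) \<partial>count_space UNIV)" for a
    proof -
      have "ennreal (pmf (mq_trans n (D a) n) d') = (\<integral>\<^sup>+k. indicator ((\<lambda>k. (D a)(n - 1 := D a (n - 1) + k)) -` {d'}) k \<partial>geometric_pmf (1 / real n))"
        unfolding mq_trans_n[OF n1] by (rule ennreal_pmf_map)
      also have "\<dots> = (\<integral>\<^sup>+k. ennreal (y^k*e) * I (a+k) \<partial>count_space UNIV)"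
        unfolding nn_integral_measure_pmf
      proof (rule nn_integral_cong)
        fix k :: nat
        have pg: "pmf (geometric_pmf (1 / real n)) k = y^k * e"
          unfolding y_def e_def using n1 by (subst pmf_geometric) auto
        have "(D a)(n - 1 := D a (n - 1) + k) = D (a+k)" unfolding D_def by simp
        then show "ennreal (pmf (geometric_pmf (1 / real n)) k) * indicator ((\<lambda>k. (D a)(n - 1 := D a (n - 1) + k)) -` {d'}) k = ennreal (y^k*e) * I (a+k)"
          unfolding pg I_def by (auto split: split_indicator)
      qed
      finally show ?thesis unfolding Lf_def sg_def s'_def D_def by simp
    qed
    have R: "ennreal (1 / real n) * indicator {d'} (D a) = ennreal (1 / real n) * I a" for a
      unfolding I_def by (auto split: split_indicator)
    have G: "GP n \<sigma> (n-1) = geometric_pmf (1 - x)"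
      unfolding GP_def x_def by simp
    show "(\<integral>\<^sup>+a. Lf d' n (g(n - 1 := a)) \<partial>GP n \<sigma> (n - 1)) =
          (\<integral>\<^sup>+a. ennreal (1 / real n) * indicator {d'} (g(n - 1 := a)) \<partial>GP n \<sigma> (n - 1))"
      unfolding D_def[symmetric] L R G
      using ss xs x y e sg s' \<kappa> by (intro key_pmf_n) auto
  qed
qed

end



context mqloc
begin

definition AA :: "(nat \<Rightarrow> nat) \<Rightarrow> nat \<Rightarrow> ennreal" where
  "AA d' j = (\<integral>\<^sup>+d. ennreal (pmf (mq_trans n d j) d') \<partial>\<pi>)"
definition BB :: "(nat \<Rightarrow> nat) \<Rightarrow> nat \<Rightarrow> ennreal" where
  "BB d' j = (\<integral>\<^sup>+d. indicator {0} (d j) * ennreal (pmf (mq_trans n d (Suc j)) d') \<partial>\<pi>)"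

lemma PP: "(\<integral>\<^sup>+d. indicator {d'} d \<partial>\<pi>) = ennreal (pmf \<pi> d')"
  by (simp add: emeasure_pmf_single)

lemma Lf_int:
  assumes "1 \<le> j"
  shows "(\<integral>\<^sup>+d. Lf d' j d \<partial>\<pi>) = ennreal (pmf \<sigma> j) * AA d' j + ennreal (sP \<sigma> (j-1)) * BB d' (j-1)"
proof -
  have "(\<integral>\<^sup>+d. Lf d' j d \<partial>\<pi>) = (\<integral>\<^sup>+d. ennreal (pmf \<sigma> j) * ennreal (pmf (mq_trans n d j) d')
      + ennreal (sP \<sigma> (j-1)) * (indicator {0} (d (j-1)) * ennreal (pmf (mq_trans n d (Suc (j-1))) d')) \<partial>\<pi>)"
  proof (rule nn_integral_cong)
    fix d :: "nat \<Rightarrow> nat"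
    have "Suc (j-1) = j" using assms by simp
    then show "Lf d' j d = ennreal (pmf \<sigma> j) * ennreal (pmf (mq_trans n d j) d')
      + ennreal (sP \<sigma> (j-1)) * (indicator {0} (d (j-1)) * ennreal (pmf (mq_trans n d (Suc (j-1))) d'))"
      unfolding Lf_def using sP_nonneg[of "j-1"]
      by (auto simp: ennreal_plus distrib_right split: split_indicator)
  qed
  also have "\<dots> = ennreal (pmf \<sigma> j) * AA d' j + ennreal (sP \<sigma> (j-1)) * BB d' (j-1)"
    unfolding AA_def BB_def by (simp add: nn_integral_add nn_integral_cmult)
  finally show ?thesis .
qed

lemma Rf_int:
  shows "(\<integral>\<^sup>+d. Rf d' j d \<partial>\<pi>) = ennreal (1 / real n) * ennreal (pmf \<pi> d') + ennreal (sP \<sigma> j) * BB d' j"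
  unfolding Rf_def BB_def PP[symmetric] by (simp add: nn_integral_add nn_integral_cmult)

lemma tele:
  assumes "m \<le> n - 1"
  shows "(\<Sum>j\<in>{1..m}. ennreal (pmf \<sigma> j) * AA d' j) = ennreal (real m / real n) * ennreal (pmf \<pi> d') + ennreal (sP \<sigma> m) * BB d' m"
  using assms
proof (induction m)
  case 0 then show ?case by (simp add: sP0)
next
  case (Suc m)
  have j: "1 \<le> Suc m" "Suc m \<le> n - 1" using Suc by auto
  have k: "ennreal (pmf \<sigma> (Suc m)) * AA d' (Suc m) + ennreal (sP \<sigma> m) * BB d' m
      = ennreal (1 / real n) * ennreal (pmf \<pi> d') + ennreal (sP \<sigma> (Suc m)) * BB d' (Suc m)"
    using key_j[OF j, of d'] Lf_int[OF j(1), of d'] Rf_int[of d' "Suc m"] by simp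
  have "(\<Sum>j\<in>{1..Suc m}. ennreal (pmf \<sigma> j) * AA d' j) = (\<Sum>j\<in>{1..m}. ennreal (pmf \<sigma> j) * AA d' j) + ennreal (pmf \<sigma> (Suc m)) * AA d' (Suc m)"
    by simp
  also have "\<dots> = ennreal (real m / real n) * ennreal (pmf \<pi> d') + (ennreal (pmf \<sigma> (Suc m)) * AA d' (Suc m) + ennreal (sP \<sigma> m) * BB d' m)"
    using Suc(1) Suc(2) by (simp only: Suc_leD ac_simps)
  also have "\<dots> = (ennreal (real m / real n) * ennreal (pmf \<pi> d') + ennreal (1 / real n) * ennreal (pmf \<pi> d')) + ennreal (sP \<sigma> (Suc m)) * BB d' (Suc m)"
    unfolding k by (simp only: ac_simps)
  also have "ennreal (real m / real n) * ennreal (pmf \<pi> d') + ennreal (1 / real n) * ennreal (pmf \<pi> d') = ennreal (real (Suc m) / real n) * ennreal (pmf \<pi> d')"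
  proof -
    have "ennreal (real m / real n) + ennreal (1 / real n) = ennreal (real (Suc m) / real n)"
      by (subst ennreal_plus[symmetric]) (auto simp: add_divide_distrib)
    then show ?thesis by (simp only: distrib_right[symmetric])
  qed
  finally show ?case .
qed

lemma total: "(\<Sum>j\<in>{1..n}. ennreal (pmf \<sigma> j) * AA d' j) = ennreal (pmf \<pi> d')"
proof -
  have e: "{1..n} = insert n {1..n-1}" using n1 by auto
  have "(\<Sum>j\<in>{1..n}. ennreal (pmf \<sigma> j) * AA d' j) = ennreal (pmf \<sigma> n) * AA d' n + (\<Sum>j\<in>{1..n-1}. ennreal (pmf \<sigma> j) * AA d' j)"
    unfolding e by (subst sum.insert) auto
  also have "\<dots> = ennreal (real (n-1) / real n) * ennreal (pmf \<pi> d') + (ennreal (pmf \<sigma> n) * AA d' n + ennreal (sP \<sigma> (n-1)) * BB d' (n-1))"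
    unfolding tele[OF order.refl] by (simp only: ac_simps)
  also have "ennreal (pmf \<sigma> n) * AA d' n + ennreal (sP \<sigma> (n-1)) * BB d' (n-1) = ennreal (1 / real n) * ennreal (pmf \<pi> d')"
    using key_n[of d'] Lf_int[OF n1, of d'] PP[of d'] by (simp add: nn_integral_cmult)
  also have "ennreal (real (n-1) / real n) * ennreal (pmf \<pi> d') + ennreal (1 / real n) * ennreal (pmf \<pi> d') = ennreal (pmf \<pi> d')"
  proof -
    have "real (n-1) / real n + 1 / real n = 1" using n1 by (simp add: of_nat_diff field_simps)
    then have "ennreal (real (n-1) / real n) + ennreal (1 / real n) = 1"
      by (subst ennreal_plus[symmetric]) auto
    then show ?thesis by (simp only: distrib_right[symmetric] mult_1)
  qed
  finally show ?thesis .
qed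

lemma stationary: "bind_pmf \<pi> (mq_step n \<sigma>) = \<pi>"
proof (rule pmf_eqI)
  fix d' :: "nat \<Rightarrow> nat"
  have "ennreal (pmf (bind_pmf \<pi> (mq_step n \<sigma>)) d') = (\<integral>\<^sup>+d. \<integral>\<^sup>+i. ennreal (pmf (mq_trans n d i) d') \<partial>\<sigma> \<partial>\<pi>)"
    unfolding mq_step_def by (simp add: ennreal_pmf_bind)
  also have "\<dots> = (\<integral>\<^sup>+i. AA d' i \<partial>\<sigma>)"
    unfolding AA_def by (rule nn_swap_pmf)
  also have "\<dots> = (\<Sum>j\<in>{1..n}. AA d' j * ennreal (pmf \<sigma> j))"
    using supp by (intro nn_integral_measure_pmf_support) auto
  also have "\<dots> = ennreal (pmf \<pi> d')"
    using total[of d'] by (simp add: mult.commute)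
  finally show "pmf (bind_pmf \<pi> (mq_step n \<sigma>)) d' = pmf \<pi> d'"
    by (simp add: ennreal_inj)
qed

end

theorem theorem5:
  fixes n :: nat and \<sigma> :: "nat pmf"
  assumes "set_pmf \<sigma> \<subseteq> {1..n}"
    and "\<forall>i\<in>{1..n-1}. measure_pmf.prob \<sigma> {..i} > real i / real n"
  shows "mq_stationary n \<sigma>
           (Pi_pmf {1..n-1} 0
              (\<lambda>i. geometric_pmf (1 - real i / (real n * measure_pmf.prob \<sigma> {..i}))))"
proof -
  interpret mqloc n \<sigma> using assms by unfold_locales
  have "(\<lambda>i. geometric_pmf (1 - real i / (real n * measure_pmf.prob \<sigma> {..i}))) = GP n \<sigma>"
    by (simp add: fun_eq_iff GP_def qP_def sP_def)
  then show ?thesis unfolding mq_stationary_def using stationary by simp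
qed


end
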